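(* Let $h$ be a probability density on $\mathbb R$ satisfying (H1) $h$ is symmetric, positive and decreasing on $[0,\infty)$, and (H2) $\log(1/h(x))\le c_1(1+\log^{1+\kappa}(1+x))$ for all $x\ge0$, for some constants $c_1>0$, $\kappa\ge0$. For $\sigma>0$ let $\pi$ be the law of $\sigma\zeta$ where $\zeta$ has density $h$; let $\theta\sim\pi$ and $X\mid\theta\sim\mathcal N(\theta,1/n)$. Then there is a constant $C>0$ (depending only on $h$) such that for all $n\ge1$, $t\in\mathbb R$, $\theta_0\in\mathbb R$ and $\sigma>0$, $$E_{\theta_0}E^\pi\big[e^{t\sqrt n(\theta-X)}\,\big|\,X\big]\le C\,\sigma\sqrt n\, e^{t^2/2}\exp\Big\{c_1\log^{1+\kappa}\Big(1+\frac{|\theta_0|+1/\sqrt n}{\sigma}\Big)\Big\}.$$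
   Context: $E^\pi[\cdot\mid X]$ denotes expectation under the posterior distribution of $\theta$ given $X$ for prior $\pi$; $E_{\theta_0}$ denotes expectation over $X\sim\mathcal N(\theta_0,1/n)$. *)

theory Defs
  imports "HOL-Probability.Probability"
begin

text \<open>Prior pi = law of sigma*zeta, zeta with density h: prior density theta |-> h(theta/sigma)/sigma.
  Likelihood: X | theta ~ N(theta, 1/n), density x |-> normal_density theta (1/sqrt n) x.\<close>

definition prior_dens :: "(real \<Rightarrow> real) \<Rightarrow> real \<Rightarrow> real \<Rightarrow> real" where
  "prior_dens h \<sigma> \<theta> = h (\<theta> / \<sigma>) / \<sigma>"

definition lik :: "nat \<Rightarrow> real \<Rightarrow> real \<Rightarrow> real" where
  "lik n \<theta> x = normal_density \<theta> (1 / sqrt (real n)) x"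

definition post_exp :: "(real \<Rightarrow> real) \<Rightarrow> real \<Rightarrow> nat \<Rightarrow> (real \<Rightarrow> real) \<Rightarrow> real \<Rightarrow> real" where
  "post_exp h \<sigma> n g x =
     (\<integral>\<theta>. g \<theta> * lik n \<theta> x * prior_dens h \<sigma> \<theta> \<partial>lborel) /
     (\<integral>\<theta>. lik n \<theta> x * prior_dens h \<sigma> \<theta> \<partial>lborel)"

end

theory Submission
  imports Defs
begin

lemma gauss_shift:
  fixes r t \<theta> x :: real assumes r: "r > 0"
  shows "exp (t * r * (\<theta> - x)) * normal_density \<theta> (1/r) x = exp (t\<^sup>2/2) * normal_density (\<theta> - t/r) (1/r) x"
proof -
  have e: "t * r * (\<theta> - x) + (-(x - \<theta>)\<^sup>2 / (2 * (1/r)\<^sup>2)) = t\<^sup>2/2 + (-(x - (\<theta> - t/r))\<^sup>2 / (2 * (1/r)\<^sup>2))"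
    using r by (simp add: field_simps power2_eq_square)
  show ?thesis unfolding normal_density_def
    using e by (simp add: exp_add[symmetric] algebra_simps)
qed

lemma nn_normal: "s > 0 \<Longrightarrow> (\<integral>\<^sup>+x. ennreal (normal_density \<mu> s x) \<partial>lborel) = 1"
  by (subst nn_integral_eq_integral) (auto intro: integrable_normal_density integral_normal_density)

lemma gauss_mgf:
  fixes r t \<theta> :: real assumes r: "r > 0"
  shows "(\<integral>\<^sup>+x. ennreal (exp (t * r * (\<theta> - x)) * normal_density \<theta> (1/r) x) \<partial>lborel) = ennreal (exp (t\<^sup>2/2))"
  unfolding gauss_shift[OF r]
  by (simp add: ennreal_mult nn_integral_cmult nn_normal r)


lemma enn2real_le: "ennreal (enn2real X) \<le> X"
  by (cases "X = top") (auto simp: less_top[symmetric])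

lemma lik_lower:
  fixes r \<theta> \<theta>0 x :: real assumes r: "r > 0"
    and I: "\<theta> \<in> (if x \<ge> \<theta>0 then {\<theta>0..\<theta>0+1/r} else {\<theta>0-1/r..\<theta>0})"
  shows "exp (-1/2) * normal_density \<theta>0 (1/r) x \<le> normal_density \<theta> (1/r) x"
proof -
  have sq: "(x-\<theta>)\<^sup>2 \<le> (x-\<theta>0)\<^sup>2 + (1/r)\<^sup>2"
  proof (cases "x \<ge> \<theta>0")
    case True
    then have "\<theta>0 \<le> \<theta>" "\<theta> \<le> \<theta>0 + 1/r" using I by auto
    show ?thesis
    proof (cases "\<theta> \<le> x")
      case True
      then have "(x-\<theta>)\<^sup>2 \<le> (x-\<theta>0)\<^sup>2" using \<open>\<theta>0 \<le> \<theta>\<close> by (intro power_mono) auto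
      then show ?thesis by (simp add: add_increasing2)
    next
      case False
      then have "(\<theta>-x)\<^sup>2 \<le> (1/r)\<^sup>2" using \<open>\<theta> \<le> \<theta>0 + 1/r\<close> \<open>x \<ge> \<theta>0\<close>
        by (intro power_mono) auto
      then have "(x-\<theta>)\<^sup>2 \<le> (1/r)\<^sup>2" by (simp add: power2_commute)
      then show ?thesis by (simp add: add_increasing)
    qed
  next
    case False
    then have "\<theta>0 - 1/r \<le> \<theta>" "\<theta> \<le> \<theta>0" using I by auto
    show ?thesis
    proof (cases "\<theta> \<ge> x")
      case True
      then have "(\<theta>-x)\<^sup>2 \<le> (\<theta>0-x)\<^sup>2" using \<open>\<theta> \<le> \<theta>0\<close> 
        by (intro power_mono) auto
      then have "(x-\<theta>)\<^sup>2 \<le> (x-\<theta>0)\<^sup>2" by (simp add: power2_commute)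
      then show ?thesis by (simp add: add_increasing2)
    next
      case False
      then have "(x-\<theta>)\<^sup>2 \<le> (1/r)\<^sup>2" using \<open>\<theta>0 - 1/r \<le> \<theta>\<close> \<open>\<not> x \<ge> \<theta>0\<close> r
        by (intro power_mono) auto
      then show ?thesis by (simp add: add_increasing)
    qed
  qed
  have "-1/2 + (-(x - \<theta>0)\<^sup>2 / (2 * (1/r)\<^sup>2)) \<le> -(x - \<theta>)\<^sup>2 / (2 * (1/r)\<^sup>2)"
  proof -
    have "(x - \<theta>)\<^sup>2 / (2 * (1/r)\<^sup>2) \<le> ((x-\<theta>0)\<^sup>2 + (1/r)\<^sup>2) / (2 * (1/r)\<^sup>2)"
      using sq r by (intro divide_right_mono) auto
    also have "\<dots> = (x-\<theta>0)\<^sup>2 / (2 * (1/r)\<^sup>2) + 1/2" using r by (simp add: field_simps)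
    finally show ?thesis by simp
  qed
  then have "exp (-1/2 + (-(x - \<theta>0)\<^sup>2 / (2 * (1/r)\<^sup>2))) \<le> exp (-(x - \<theta>)\<^sup>2 / (2 * (1/r)\<^sup>2))"
    by simp
  then show ?thesis unfolding normal_density_def exp_add
    by (simp add: mult.left_commute mult_left_mono divide_right_mono)
qed


lemma prior_lower:
  fixes h :: "real \<Rightarrow> real"
  assumes symm: "\<And>x. h (- x) = h x"
    and decr: "\<And>x y. 0 \<le> x \<Longrightarrow> x \<le> y \<Longrightarrow> h y \<le> h x"
    and s: "\<sigma> > 0" and th: "\<bar>\<theta>\<bar> \<le> b"
  shows "h (b / \<sigma>) / \<sigma> \<le> prior_dens h \<sigma> \<theta>"
proof -
  have "h (\<theta>/\<sigma>) = h \<bar>\<theta>/\<sigma>\<bar>" by (cases "\<theta>/\<sigma> \<ge> 0") (auto simp: symm abs_if)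
  moreover have "h (b/\<sigma>) \<le> h \<bar>\<theta>/\<sigma>\<bar>"
    using th s by (intro decr) (auto simp: divide_right_mono)
  ultimately show ?thesis unfolding prior_dens_def using s by (simp add: divide_right_mono)
qed

lemma prior_nn:
  fixes h :: "real \<Rightarrow> real"
  assumes meas: "h \<in> borel_measurable borel"
    and dens: "has_bochner_integral lborel h 1"
    and pos: "\<And>x. h x > 0" and s: "\<sigma> > 0"
  shows "(\<integral>\<^sup>+\<theta>. ennreal (prior_dens h \<sigma> \<theta>) \<partial>lborel) = 1"
proof -
  have [measurable]: "h \<in> borel_measurable borel" by fact
  have h1: "(\<integral>\<^sup>+x. ennreal (h x) \<partial>lborel) = 1"
    using dens pos by (subst nn_integral_eq_integral) (auto simp: has_bochner_integral_iff less_imp_le)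
  have "(\<integral>\<^sup>+\<theta>. ennreal (prior_dens h \<sigma> \<theta>) \<partial>lborel)
      = ennreal \<bar>\<sigma>\<bar> * (\<integral>\<^sup>+x. ennreal (prior_dens h \<sigma> (0 + \<sigma> * x)) \<partial>lborel)"
    using s by (intro nn_integral_real_affine) (auto simp: prior_dens_def)
  also have "\<dots> = ennreal \<sigma> * (\<integral>\<^sup>+x. ennreal (1/\<sigma>) * ennreal (h x) \<partial>lborel)"
    using s pos by (simp add: prior_dens_def ennreal_mult[symmetric] less_imp_le)
  also have "\<dots> = 1" using s by (simp add: nn_integral_cmult h1 ennreal_mult[symmetric])
  finally show ?thesis .
qed


lemma nd_le: "r > 0 \<Longrightarrow> normal_density \<mu> (1/r) x \<le> r"
proof -
  assume r: "r > 0"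
  have "sqrt (2 * pi * (1/r)\<^sup>2) = sqrt (2*pi) / r" using r by (simp add: real_sqrt_mult real_sqrt_divide)
  moreover have "sqrt (2*pi) \<ge> 1" using pi_gt3 by simp
  ultimately have a: "1 / sqrt (2 * pi * (1/r)\<^sup>2) \<le> r" using r by (simp add: field_simps)
  have b: "exp (-(x - \<mu>)\<^sup>2/ (2 * (1/r)\<^sup>2)) \<le> 1" by simp
  have "1 / sqrt (2 * pi * (1/r)\<^sup>2) * exp (-(x - \<mu>)\<^sup>2/ (2 * (1/r)\<^sup>2)) \<le> r * 1"
    by (rule mult_mono[OF a b]) (use r in auto)
  then show ?thesis unfolding normal_density_def by simp
qed

theorem mainTheorem4:
  fixes h :: "real \<Rightarrow> real" and c1 \<kappa> :: real
  assumes meas: "h \<in> borel_measurable borel"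
    and dens: "has_bochner_integral lborel h 1"
    and symm: "\<And>x. h (- x) = h x"
    and pos: "\<And>x. h x > 0"
    and decr: "\<And>x y. 0 \<le> x \<Longrightarrow> x \<le> y \<Longrightarrow> h y \<le> h x"
    and c1: "c1 > 0" and \<kappa>: "\<kappa> \<ge> 0"
    and H2: "\<And>x. x \<ge> 0 \<Longrightarrow> ln (1 / h x) \<le> c1 * (1 + ln (1 + x) powr (1 + \<kappa>))"
  shows "\<exists>C>0. \<forall>(n::nat) t \<theta>0 \<sigma>. n \<ge> 1 \<longrightarrow> \<sigma> > 0 \<longrightarrow>
     (\<integral>\<^sup>+ x. ennreal (normal_density \<theta>0 (1 / sqrt (real n)) x *
          post_exp h \<sigma> n (\<lambda>\<theta>. exp (t * sqrt (real n) * (\<theta> - x))) x) \<partial>lborel)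
     \<le> ennreal (C * \<sigma> * sqrt (real n) * exp (t\<^sup>2 / 2) *
          exp (c1 * ln (1 + (\<bar>\<theta>0\<bar> + 1 / sqrt (real n)) / \<sigma>) powr (1 + \<kappa>)))"
proof (intro exI[of _ "exp (1/2 + c1)"] conjI allI impI)
  have [measurable]: "h \<in> borel_measurable borel" by fact
  show "exp (1/2 + c1) > 0" by simp
  fix n :: nat and t \<theta>0 \<sigma> :: real
  assume n: "n \<ge> 1" and s: "\<sigma> > 0"
  define r where "r = sqrt (real n)"
  have r: "r > 0" using n by (simp add: r_def)
  define y where "y = (\<bar>\<theta>0\<bar> + 1/r)/\<sigma>"
  have y0: "y \<ge> 0" using s r by (simp add: y_def)
  define E where "E = exp (c1 * ln (1 + y) powr (1 + \<kappa>))"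
  define C where "C = exp (1/2 + c1)"
  define K where "K = \<sigma> * r * exp (1/2) / h y"
  have K0: "K > 0" using s r pos by (simp add: K_def)
  have K_le: "K \<le> C * \<sigma> * r * E"
  proof -
    have "ln (1 / h y) \<le> c1 + c1 * ln (1 + y) powr (1 + \<kappa>)" using H2[OF y0] by (simp add: algebra_simps)
    moreover have "1 / h y = exp (ln (1 / h y))" using pos[of y] by simp
    ultimately have "1 / h y \<le> exp (c1 + c1 * ln (1 + y) powr (1 + \<kappa>))"
      by (metis exp_le_cancel_iff)
    then have "1 / h y \<le> exp c1 * E" by (simp add: E_def exp_add)
    then have "\<sigma> * r * exp (1/2) * (1 / h y) \<le> \<sigma> * r * exp (1/2) * (exp c1 * E)"
      using s r by (intro mult_left_mono) auto
    moreover have "C = exp (1/2) * exp c1" by (simp add: C_def exp_add[symmetric])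
    ultimately show ?thesis by (simp add: K_def mult_ac)
  qed
  define p where "p = prior_dens h \<sigma>"
  have p_meas[measurable]: "p \<in> borel_measurable borel" unfolding p_def prior_dens_def[abs_def] by measurable
  have p_nn: "\<And>\<theta>. p \<theta> \<ge> 0" using pos s by (simp add: p_def prior_dens_def less_imp_le)
  have p_int: "(\<integral>\<^sup>+\<theta>. ennreal (p \<theta>) \<partial>lborel) = 1"
    using prior_nn[OF meas dens pos s] by (simp add: p_def)
  have lik_eq: "\<And>\<theta> x. lik n \<theta> x = normal_density \<theta> (1/r) x" by (simp add: lik_def r_def)
  define D where "D x = (\<integral>\<theta>. lik n \<theta> x * p \<theta> \<partial>lborel)" for x
  define N where "N x = (\<integral>\<theta>. exp (t * r * (\<theta> - x)) * lik n \<theta> x * p \<theta> \<partial>lborel)" for x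
  have post: "\<And>x. post_exp h \<sigma> n (\<lambda>\<theta>. exp (t * sqrt (real n) * (\<theta> - x))) x = N x / D x"
    by (simp add: post_exp_def N_def D_def p_def r_def)
  have D_low: "normal_density \<theta>0 (1/r) x \<le> K * D x" for x
  proof -
    define f where "f \<theta> = lik n \<theta> x * p \<theta>" for \<theta>
    have f_meas[measurable]: "f \<in> borel_measurable borel"
      unfolding f_def lik_def normal_density_def p_def prior_dens_def by measurable
    have f_nn: "f \<theta> \<ge> 0" for \<theta> using p_nn by (simp add: f_def lik_def)
    have "(\<integral>\<^sup>+\<theta>. ennreal (f \<theta>) \<partial>lborel) \<le> (\<integral>\<^sup>+\<theta>. ennreal r * ennreal (p \<theta>) \<partial>lborel)"
      using p_nn r by (intro nn_integral_mono) (auto simp: f_def lik_eq ennreal_mult[symmetric] intro!: ennreal_leI mult_right_mono nd_le)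
    also have "\<dots> = ennreal r" by (subst nn_integral_cmult, measurable) (simp add: p_int)
    finally have fin: "(\<integral>\<^sup>+\<theta>. ennreal (f \<theta>) \<partial>lborel) < top"
      using ennreal_less_top le_less_trans by blast
    have Deq: "ennreal (D x) = (\<integral>\<^sup>+\<theta>. ennreal (f \<theta>) \<partial>lborel)"
      using fin f_nn by (simp add: D_def f_def[symmetric] integral_eq_nn_integral less_top)
    define I where "I = (if x \<ge> \<theta>0 then {\<theta>0..\<theta>0+1/r} else {\<theta>0-1/r..\<theta>0})"
    define c where "c = exp (-1/2) * normal_density \<theta>0 (1/r) x * (h y / \<sigma>)"
    have c0: "c \<ge> 0" using pos s by (simp add: c_def less_imp_le)
    have I_meas: "I \<in> sets lborel" by (simp add: I_def)
    have I_em: "emeasure lborel I = ennreal (1/r)" using r by (simp add: I_def)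
    have cf: "c \<le> f \<theta>" if "\<theta> \<in> I" for \<theta>
    proof -
      have a: "exp (-1/2) * normal_density \<theta>0 (1/r) x \<le> lik n \<theta> x"
        using lik_lower[OF r, where \<theta>=\<theta> and x=x and \<theta>0=\<theta>0] that by (simp add: I_def lik_eq)
      have "\<bar>\<theta>\<bar> \<le> \<bar>\<theta>0\<bar> + 1/r" using that r by (auto simp: I_def split: if_splits)
      then have b: "h y / \<sigma> \<le> p \<theta>"
        using prior_lower[where h=h, OF symm decr s] by (simp add: y_def p_def)
      show ?thesis unfolding c_def f_def
        by (rule mult_mono[OF a b]) (use pos s in \<open>auto simp: lik_def less_imp_le\<close>)
    qed
    have "ennreal (c * (1/r)) = (\<integral>\<^sup>+\<theta>. ennreal c * indicator I \<theta> \<partial>lborel)"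
      using I_meas I_em c0 r by (simp add: nn_integral_cmult_indicator ennreal_mult[symmetric])
    also have "\<dots> \<le> (\<integral>\<^sup>+\<theta>. ennreal (f \<theta>) \<partial>lborel)"
      by (intro nn_integral_mono) (auto simp: indicator_def cf intro!: ennreal_leI)
    finally have le: "ennreal (c * (1/r)) \<le> ennreal (D x)" using Deq by simp
    have "D x \<ge> 0" unfolding D_def using p_nn by (intro integral_nonneg_AE AE_I2) (simp add: lik_def)
    then have "c * (1/r) \<le> D x" using le by (simp add: ennreal_le_iff)
    then have "K * (c * (1/r)) \<le> K * D x" using K0 by (intro mult_left_mono) auto
    moreover have "K * (c * (1/r)) = normal_density \<theta>0 (1/r) x"
      using pos[of y] s r by (simp add: K_def c_def field_simps exp_minus exp_add[symmetric])
    ultimately show ?thesis by simp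
  qed
  have D_pos: "D x > 0" for x
  proof -
    have "0 < normal_density \<theta>0 (1/r) x" using r by (intro normal_density_pos) simp
    then have "0 < K * D x" using D_low[of x] by simp
    then show ?thesis using K0 by (simp add: zero_less_mult_iff)
  qed
  define G where "G x \<theta> = exp (t * r * (\<theta> - x)) * lik n \<theta> x * p \<theta>" for x \<theta>
  have G_nn: "G x \<theta> \<ge> 0" for x \<theta> using p_nn by (simp add: G_def lik_def)
  have G_meas[measurable]: "(\<lambda>(x, \<theta>). ennreal (G x \<theta>)) \<in> borel_measurable (lborel \<Otimes>\<^sub>M lborel)"
    unfolding G_def lik_def normal_density_def p_def prior_dens_def by measurable
  have G_meas2[measurable]: "(\<lambda>\<theta>. G x \<theta>) \<in> borel_measurable borel" for x
    unfolding G_def lik_def normal_density_def p_def prior_dens_def by measurable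
  have N_nn: "N x \<ge> 0" for x unfolding N_def using G_nn by (intro integral_nonneg_AE AE_I2) (simp add: G_def mult.assoc)
  have N_le: "ennreal (N x) \<le> (\<integral>\<^sup>+\<theta>. ennreal (G x \<theta>) \<partial>lborel)" for x
  proof -
    have "N x = enn2real (\<integral>\<^sup>+\<theta>. ennreal (G x \<theta>) \<partial>lborel)"
      unfolding N_def G_def[symmetric] using G_nn by (intro integral_eq_nn_integral) auto
    then show ?thesis using enn2real_le by simp
  qed
  have inner: "(\<integral>\<^sup>+x. ennreal (G x \<theta>) \<partial>lborel) = ennreal (exp (t\<^sup>2/2)) * ennreal (p \<theta>)" for \<theta>
  proof -
    have "(\<integral>\<^sup>+x. ennreal (G x \<theta>) \<partial>lborel)
        = (\<integral>\<^sup>+x. ennreal (exp (t * r * (\<theta> - x)) * normal_density \<theta> (1/r) x) * ennreal (p \<theta>) \<partial>lborel)"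
      using p_nn by (intro nn_integral_cong) (simp add: G_def lik_eq ennreal_mult[symmetric])
    also have "\<dots> = (\<integral>\<^sup>+x. ennreal (exp (t * r * (\<theta> - x)) * normal_density \<theta> (1/r) x) \<partial>lborel) * ennreal (p \<theta>)"
      by (rule nn_integral_multc) (unfold normal_density_def, measurable)
    also have "\<dots> = ennreal (exp (t\<^sup>2/2)) * ennreal (p \<theta>)" by (simp add: gauss_mgf[OF r])
    finally show ?thesis .
  qed
  have pw: "normal_density \<theta>0 (1/r) x * (N x / D x) \<le> K * N x" for x
  proof -
    have "normal_density \<theta>0 (1/r) x * N x \<le> K * D x * N x"
      using D_low[of x] N_nn[of x] by (intro mult_right_mono) auto
    then show ?thesis using D_pos[of x] by (simp add: field_simps)
  qed
  have "(\<integral>\<^sup>+ x. ennreal (normal_density \<theta>0 (1 / sqrt (real n)) x *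
          post_exp h \<sigma> n (\<lambda>\<theta>. exp (t * sqrt (real n) * (\<theta> - x))) x) \<partial>lborel)
      = (\<integral>\<^sup>+ x. ennreal (normal_density \<theta>0 (1/r) x * (N x / D x)) \<partial>lborel)"
    by (simp add: post r_def)
  also have "\<dots> \<le> (\<integral>\<^sup>+ x. ennreal K * ennreal (N x) \<partial>lborel)"
  proof (intro nn_integral_mono)
    fix x
    have "ennreal (normal_density \<theta>0 (1/r) x * (N x / D x)) \<le> ennreal (K * N x)"
      by (rule ennreal_leI) (rule pw)
    then show "ennreal (normal_density \<theta>0 (1/r) x * (N x / D x)) \<le> ennreal K * ennreal (N x)"
      using K0 N_nn[of x] by (simp add: ennreal_mult)
  qed
  also have "\<dots> \<le> (\<integral>\<^sup>+ x. ennreal K * (\<integral>\<^sup>+\<theta>. ennreal (G x \<theta>) \<partial>lborel) \<partial>lborel)"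
    by (intro mult_left_mono nn_integral_mono N_le) auto
  also have "\<dots> = ennreal K * (\<integral>\<^sup>+ x. (\<integral>\<^sup>+\<theta>. ennreal (G x \<theta>) \<partial>lborel) \<partial>lborel)"
    by (rule nn_integral_cmult) measurable
  also have "(\<integral>\<^sup>+ x. (\<integral>\<^sup>+\<theta>. ennreal (G x \<theta>) \<partial>lborel) \<partial>lborel)
      = (\<integral>\<^sup>+ \<theta>. (\<integral>\<^sup>+x. ennreal (G x \<theta>) \<partial>lborel) \<partial>lborel)"
    by (rule lborel_pair.Fubini'[symmetric]) (rule G_meas)
  also have "\<dots> = (\<integral>\<^sup>+ \<theta>. ennreal (exp (t\<^sup>2/2)) * ennreal (p \<theta>) \<partial>lborel)"
    by (simp add: inner)
  also have "\<dots> = ennreal (exp (t\<^sup>2/2))"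
    by (subst nn_integral_cmult, measurable) (simp add: p_int)
  also have "ennreal K * ennreal (exp (t\<^sup>2/2)) = ennreal (K * exp (t\<^sup>2/2))"
    using K0 by (simp add: ennreal_mult)
  also have "\<dots> \<le> ennreal (C * \<sigma> * r * E * exp (t\<^sup>2/2))"
    using K_le by (intro ennreal_leI mult_right_mono) auto
  finally show "(\<integral>\<^sup>+ x. ennreal (normal_density \<theta>0 (1 / sqrt (real n)) x *
          post_exp h \<sigma> n (\<lambda>\<theta>. exp (t * sqrt (real n) * (\<theta> - x))) x) \<partial>lborel)
     \<le> ennreal (exp (1/2 + c1) * \<sigma> * sqrt (real n) * exp (t\<^sup>2 / 2) *
          exp (c1 * ln (1 + (\<bar>\<theta>0\<bar> + 1 / sqrt (real n)) / \<sigma>) powr (1 + \<kappa>)))"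
    by (simp add: C_def E_def y_def r_def mult_ac)
qed

end
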